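(* Let $X$ be a group and $B$ a left $X$-group. The assignment $[q]\mapsto[(q\circ\iota_X)^{-1}]$, where $(q\circ\iota_X)^{-1}(x)=(q(\iota_X(x)))^{-1}$, is a well-defined isomorphism of pointed sets $$\mathsf{Desc}^1(\mathsf T^l_{\iota_B},((B,m_B),p_B))\cong\mathcal H^1(X,B),$$ and there is an isomorphism of groups $\mathsf{Desc}^0(\mathsf T^l_{\iota_B},((B,m_B),p_B))\cong\mathcal H^0(X,B)$. In particular these coincide with Serre's non-abelian cohomology $H^1(X,B)$ and $H^0(X,B)$.
   Context: A left $X$-group is a group $B$ with $\star:X\times B\to B$ satisfying $1_X\star b=b$, $(x_1x_2)\star b=x_1\star(x_2\star b)$, $x\star(b_1b_2)=(x\star b_1)(x\star b_2)$. $B\rtimes X$ is the group on $B\times X$ with $(b_1,x_1)(b_2,x_2)=(b_1(x_1\star b_2),x_1x_2)$; $\iota_B(b)=(b,1_X)$, $\iota_X(x)=(1_B,x)$, $p_B(b,x)=b$. $\mathcal H^0(X,B)=\{b: x\star b=b\ \forall x\}$; a 1-cocycle is $r:X\to B$ with $r(x_1x_2)=r(x_1)(x_1\star r(x_2))$; $r\sim r'$ iff $r(x)(x\star b_0)=b_0r'(x)$ for some $b_0\in B$ and all $x$; $\mathcal H^1(X,B)$ is the set of classes, pointed by the class of the trivial cocycle. $\mathcal Z^1(\mathsf T^l_{\iota_B},(B,m_B))$ is the set of maps $q:B\rtimes X\to B$ with (ZL1) $q(1)=1_B$, (ZL2) $q(\iota_B(b)a)=b\,q(a)$, (ZL3)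 $q(aa')=q(a\,\iota_B(q(a')))$ (algebra structures on the left $B$-set $B$ for the monad $(B\rtimes X)\otimes_B-$), pointed by $p_B$; $\mathsf{Desc}^1(\mathsf T^l_{\iota_B},((B,m_B),p_B))$ is its quotient by $q\sim q'$ iff $q(a)b_0=q'(a\,\iota_B(b_0))$ for some $b_0\in B$ and all $a$, pointed by $[p_B]$; $\mathsf{Desc}^0$ is the automorphism group of the algebra $((B,m_B),p_B)$, i.e. the group of maps $b\mapsto bb_0$ with $p_B(a\,\iota_B(b_0))=p_B(a)b_0$ for all $a$, under composition. *)

theory Defs
  imports "HOL-Algebra.Group" "HOL-Library.FuncSet"
begin

definition left_X_group ::
  "('x,'c) monoid_scheme \<Rightarrow> ('b,'d) monoid_scheme \<Rightarrow> ('x \<Rightarrow> 'b \<Rightarrow> 'b) \<Rightarrow> bool" where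
  "left_X_group X B act \<longleftrightarrow> group X \<and> group B \<and>
     (\<forall>x\<in>carrier X. \<forall>b\<in>carrier B. act x b \<in> carrier B) \<and>
     (\<forall>b\<in>carrier B. act \<one>\<^bsub>X\<^esub> b = b) \<and>
     (\<forall>x1\<in>carrier X. \<forall>x2\<in>carrier X. \<forall>b\<in>carrier B.
         act (x1 \<otimes>\<^bsub>X\<^esub> x2) b = act x1 (act x2 b)) \<and>
     (\<forall>x\<in>carrier X. \<forall>b1\<in>carrier B. \<forall>b2\<in>carrier B.
         act x (b1 \<otimes>\<^bsub>B\<^esub> b2) = act x b1 \<otimes>\<^bsub>B\<^esub> act x b2)"

definition sdp ::
  "('x,'c) monoid_scheme \<Rightarrow> ('b,'d) monoid_scheme \<Rightarrow> ('x \<Rightarrow> 'b \<Rightarrow> 'b) \<Rightarrow> ('b \<times> 'x) monoid" where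
  "sdp X B act = \<lparr> carrier = carrier B \<times> carrier X,
     mult = (\<lambda>(b1,x1) (b2,x2). (b1 \<otimes>\<^bsub>B\<^esub> act x1 b2, x1 \<otimes>\<^bsub>X\<^esub> x2)),
     one = (\<one>\<^bsub>B\<^esub>, \<one>\<^bsub>X\<^esub>) \<rparr>"

definition iota_B :: "('x,'c) monoid_scheme \<Rightarrow> 'b \<Rightarrow> 'b \<times> 'x" where
  "iota_B X b = (b, \<one>\<^bsub>X\<^esub>)"

definition iota_X :: "('b,'d) monoid_scheme \<Rightarrow> 'x \<Rightarrow> 'b \<times> 'x" where
  "iota_X B x = (\<one>\<^bsub>B\<^esub>, x)"

definition p_B ::
  "('x,'c) monoid_scheme \<Rightarrow> ('b,'d) monoid_scheme \<Rightarrow> ('x \<Rightarrow> 'b \<Rightarrow> 'b) \<Rightarrow> 'b \<times> 'x \<Rightarrow> 'b" where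
  "p_B X B act = restrict fst (carrier (sdp X B act))"

definition H0 ::
  "('x,'c) monoid_scheme \<Rightarrow> ('b,'d) monoid_scheme \<Rightarrow> ('x \<Rightarrow> 'b \<Rightarrow> 'b) \<Rightarrow> 'b set" where
  "H0 X B act = {b \<in> carrier B. \<forall>x\<in>carrier X. act x b = b}"

definition H0_group ::
  "('x,'c) monoid_scheme \<Rightarrow> ('b,'d) monoid_scheme \<Rightarrow> ('x \<Rightarrow> 'b \<Rightarrow> 'b) \<Rightarrow> ('b,'d) monoid_scheme" where
  "H0_group X B act = B\<lparr>carrier := H0 X B act\<rparr>"

definition Z1 ::
  "('x,'c) monoid_scheme \<Rightarrow> ('b,'d) monoid_scheme \<Rightarrow> ('x \<Rightarrow> 'b \<Rightarrow> 'b) \<Rightarrow> ('x \<Rightarrow> 'b) set" where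
  "Z1 X B act = {r \<in> carrier X \<rightarrow>\<^sub>E carrier B.
     \<forall>x1\<in>carrier X. \<forall>x2\<in>carrier X.
        r (x1 \<otimes>\<^bsub>X\<^esub> x2) = r x1 \<otimes>\<^bsub>B\<^esub> act x1 (r x2)}"

definition coh_rel ::
  "('x,'c) monoid_scheme \<Rightarrow> ('b,'d) monoid_scheme \<Rightarrow> ('x \<Rightarrow> 'b \<Rightarrow> 'b) \<Rightarrow> (('x \<Rightarrow> 'b) \<times> ('x \<Rightarrow> 'b)) set" where
  "coh_rel X B act = {(r, r'). r \<in> Z1 X B act \<and> r' \<in> Z1 X B act \<and>
     (\<exists>b0\<in>carrier B. \<forall>x\<in>carrier X. r x \<otimes>\<^bsub>B\<^esub> act x b0 = b0 \<otimes>\<^bsub>B\<^esub> r' x)}"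

definition H1 ::
  "('x,'c) monoid_scheme \<Rightarrow> ('b,'d) monoid_scheme \<Rightarrow> ('x \<Rightarrow> 'b \<Rightarrow> 'b) \<Rightarrow> ('x \<Rightarrow> 'b) set set" where
  "H1 X B act = Z1 X B act // coh_rel X B act"

definition triv_cocycle ::
  "('x,'c) monoid_scheme \<Rightarrow> ('b,'d) monoid_scheme \<Rightarrow> 'x \<Rightarrow> 'b" where
  "triv_cocycle X B = (\<lambda>x\<in>carrier X. \<one>\<^bsub>B\<^esub>)"

definition H1_base ::
  "('x,'c) monoid_scheme \<Rightarrow> ('b,'d) monoid_scheme \<Rightarrow> ('x \<Rightarrow> 'b \<Rightarrow> 'b) \<Rightarrow> ('x \<Rightarrow> 'b) set" where
  "H1_base X B act = coh_rel X B act `` {triv_cocycle X B}"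

text \<open>Z^1(T^l_{iota_B},(B,m_B)): algebra structures q : B \<rtimes> X \<rightarrow> B (ZL1)-(ZL3).\<close>
definition ZL ::
  "('x,'c) monoid_scheme \<Rightarrow> ('b,'d) monoid_scheme \<Rightarrow> ('x \<Rightarrow> 'b \<Rightarrow> 'b) \<Rightarrow> ('b \<times> 'x \<Rightarrow> 'b) set" where
  "ZL X B act = (let S = sdp X B act in
     {q \<in> carrier S \<rightarrow>\<^sub>E carrier B.
        q \<one>\<^bsub>S\<^esub> = \<one>\<^bsub>B\<^esub> \<and>
        (\<forall>b\<in>carrier B. \<forall>a\<in>carrier S. q (iota_B X b \<otimes>\<^bsub>S\<^esub> a) = b \<otimes>\<^bsub>B\<^esub> q a) \<and>
        (\<forall>a\<in>carrier S. \<forall>a'\<in>carrier S. q (a \<otimes>\<^bsub>S\<^esub> a') = q (a \<otimes>\<^bsub>S\<^esub> iota_B X (q a')))})"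

definition desc_rel ::
  "('x,'c) monoid_scheme \<Rightarrow> ('b,'d) monoid_scheme \<Rightarrow> ('x \<Rightarrow> 'b \<Rightarrow> 'b) \<Rightarrow> (('b \<times> 'x \<Rightarrow> 'b) \<times> ('b \<times> 'x \<Rightarrow> 'b)) set" where
  "desc_rel X B act = {(q, q'). q \<in> ZL X B act \<and> q' \<in> ZL X B act \<and>
     (\<exists>b0\<in>carrier B. \<forall>a\<in>carrier (sdp X B act).
        q a \<otimes>\<^bsub>B\<^esub> b0 = q' (a \<otimes>\<^bsub>sdp X B act\<^esub> iota_B X b0))}"

definition Desc1 ::
  "('x,'c) monoid_scheme \<Rightarrow> ('b,'d) monoid_scheme \<Rightarrow> ('x \<Rightarrow> 'b \<Rightarrow> 'b) \<Rightarrow> ('b \<times> 'x \<Rightarrow> 'b) set set" where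
  "Desc1 X B act = ZL X B act // desc_rel X B act"

definition Desc1_base ::
  "('x,'c) monoid_scheme \<Rightarrow> ('b,'d) monoid_scheme \<Rightarrow> ('x \<Rightarrow> 'b \<Rightarrow> 'b) \<Rightarrow> ('b \<times> 'x \<Rightarrow> 'b) set" where
  "Desc1_base X B act = desc_rel X B act `` {p_B X B act}"

text \<open>Desc^0: automorphisms b \<mapsto> b b0 of the algebra ((B,m_B),p_B), under composition.\<close>
definition Desc0 ::
  "('x,'c) monoid_scheme \<Rightarrow> ('b,'d) monoid_scheme \<Rightarrow> ('x \<Rightarrow> 'b \<Rightarrow> 'b) \<Rightarrow> ('b \<Rightarrow> 'b) monoid" where
  "Desc0 X B act = \<lparr> carrier = {(\<lambda>b\<in>carrier B. b \<otimes>\<^bsub>B\<^esub> b0) | b0. b0 \<in> carrier B \<and>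
        (\<forall>a\<in>carrier (sdp X B act).
           p_B X B act (a \<otimes>\<^bsub>sdp X B act\<^esub> iota_B X b0) = p_B X B act a \<otimes>\<^bsub>B\<^esub> b0)},
     mult = (\<lambda>f g. compose (carrier B) f g),
     one = (\<lambda>b\<in>carrier B. b) \<rparr>"

end

theory Submission
  imports Defs
begin

locale lxg = X: group X + B: group B
  for X :: "('x,'c) monoid_scheme" and B :: "('b,'d) monoid_scheme" +
  fixes act :: "'x \<Rightarrow> 'b \<Rightarrow> 'b"
  assumes act_cl: "\<And>x b. x \<in> carrier X \<Longrightarrow> b \<in> carrier B \<Longrightarrow> act x b \<in> carrier B"
  and act_one: "\<And>b. b \<in> carrier B \<Longrightarrow> act \<one>\<^bsub>X\<^esub> b = b"
  and act_mult: "\<And>x1 x2 b. x1 \<in> carrier X \<Longrightarrow> x2 \<in> carrier X \<Longrightarrow> b \<in> carrier B \<Longrightarrow>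
         act (x1 \<otimes>\<^bsub>X\<^esub> x2) b = act x1 (act x2 b)"
  and act_hom: "\<And>x b1 b2. x \<in> carrier X \<Longrightarrow> b1 \<in> carrier B \<Longrightarrow> b2 \<in> carrier B \<Longrightarrow>
         act x (b1 \<otimes>\<^bsub>B\<^esub> b2) = act x b1 \<otimes>\<^bsub>B\<^esub> act x b2"
begin

abbreviation "S \<equiv> sdp X B act"

lemma act_1: "x \<in> carrier X \<Longrightarrow> act x \<one>\<^bsub>B\<^esub> = \<one>\<^bsub>B\<^esub>"
proof -
  assume x: "x \<in> carrier X"
  have "act x \<one>\<^bsub>B\<^esub> \<otimes>\<^bsub>B\<^esub> act x \<one>\<^bsub>B\<^esub> = act x \<one>\<^bsub>B\<^esub> \<otimes>\<^bsub>B\<^esub> \<one>\<^bsub>B\<^esub>"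
    using act_hom[OF x, of "\<one>\<^bsub>B\<^esub>" "\<one>\<^bsub>B\<^esub>"] act_cl[OF x] by simp
  then show ?thesis using B.Units_l_cancel act_cl[OF x] by (metis B.Units_eq B.one_closed)
qed

lemma act_inv: "x \<in> carrier X \<Longrightarrow> b \<in> carrier B \<Longrightarrow> act x (inv\<^bsub>B\<^esub> b) = inv\<^bsub>B\<^esub> (act x b)"
proof -
  assume x: "x \<in> carrier X" and b: "b \<in> carrier B"
  have "act x b \<otimes>\<^bsub>B\<^esub> act x (inv\<^bsub>B\<^esub> b) = \<one>\<^bsub>B\<^esub>"
    using act_hom[OF x b B.inv_closed[OF b]] act_1[OF x] b by simp
  then show ?thesis using B.inv_equality act_cl x b
    by (metis B.inv_closed B.inv_comm)
qed

lemma S_mult: "(b1,x1) \<otimes>\<^bsub>S\<^esub> (b2,x2) = (b1 \<otimes>\<^bsub>B\<^esub> act x1 b2, x1 \<otimes>\<^bsub>X\<^esub> x2)"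
  by (simp add: sdp_def)

lemma S_carrier: "carrier S = carrier B \<times> carrier X" by (simp add: sdp_def)
lemma S_one: "\<one>\<^bsub>S\<^esub> = (\<one>\<^bsub>B\<^esub>, \<one>\<^bsub>X\<^esub>)" by (simp add: sdp_def)

lemma ZL_D:
  assumes q: "q \<in> ZL X B act"
  shows "q \<in> carrier S \<rightarrow>\<^sub>E carrier B" "q (\<one>\<^bsub>B\<^esub>, \<one>\<^bsub>X\<^esub>) = \<one>\<^bsub>B\<^esub>"
    "\<And>b a. b\<in>carrier B \<Longrightarrow> a\<in>carrier S \<Longrightarrow> q (iota_B X b \<otimes>\<^bsub>S\<^esub> a) = b \<otimes>\<^bsub>B\<^esub> q a"
    "\<And>a a'. a\<in>carrier S \<Longrightarrow> a'\<in>carrier S \<Longrightarrow> q (a \<otimes>\<^bsub>S\<^esub> a') = q (a \<otimes>\<^bsub>S\<^esub> iota_B X (q a'))"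
  using q by (auto simp: ZL_def Let_def S_one)

lemma ZL_cl: "q \<in> ZL X B act \<Longrightarrow> b \<in> carrier B \<Longrightarrow> x \<in> carrier X \<Longrightarrow> q (b,x) \<in> carrier B"
  using ZL_D(1) by (force simp: S_carrier)

lemma ZL_A: assumes q: "q \<in> ZL X B act" and b: "b \<in> carrier B" and x: "x \<in> carrier X"
  shows "q (b,x) = b \<otimes>\<^bsub>B\<^esub> q (\<one>\<^bsub>B\<^esub>, x)"
proof -
  have "iota_B X b \<otimes>\<^bsub>S\<^esub> (\<one>\<^bsub>B\<^esub>, x) = (b, x)"
    using b x by (simp add: iota_B_def S_mult act_one)
  then show ?thesis using ZL_D(3)[OF q b, of "(\<one>\<^bsub>B\<^esub>, x)"] x by (simp add: S_carrier)
qed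

lemma ZL_B: assumes q: "q \<in> ZL X B act" and x: "x \<in> carrier X" and y: "y \<in> carrier X"
  shows "q (\<one>\<^bsub>B\<^esub>, x \<otimes>\<^bsub>X\<^esub> y) = act x (q (\<one>\<^bsub>B\<^esub>, y)) \<otimes>\<^bsub>B\<^esub> q (\<one>\<^bsub>B\<^esub>, x)"
proof -
  have c: "q (\<one>\<^bsub>B\<^esub>, y) \<in> carrier B" using ZL_cl[OF q _ y] by simp
  have "q ((\<one>\<^bsub>B\<^esub>, x) \<otimes>\<^bsub>S\<^esub> (\<one>\<^bsub>B\<^esub>, y)) = q ((\<one>\<^bsub>B\<^esub>, x) \<otimes>\<^bsub>S\<^esub> iota_B X (q (\<one>\<^bsub>B\<^esub>, y)))"
    using ZL_D(4)[OF q] x y by (simp add: S_carrier)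
  then have "q (\<one>\<^bsub>B\<^esub>, x \<otimes>\<^bsub>X\<^esub> y) = q (act x (q (\<one>\<^bsub>B\<^esub>, y)), x)"
    using x y c by (simp add: S_mult iota_B_def act_1 act_cl)
  then show ?thesis using ZL_A[OF q act_cl[OF x c] x] by simp
qed

definition F :: "('b \<times> 'x \<Rightarrow> 'b) \<Rightarrow> 'x \<Rightarrow> 'b" where
  "F q = (\<lambda>x\<in>carrier X. inv\<^bsub>B\<^esub> (q (iota_X B x)))"
definition G :: "('x \<Rightarrow> 'b) \<Rightarrow> 'b \<times> 'x \<Rightarrow> 'b" where
  "G r = (\<lambda>a\<in>carrier S. fst a \<otimes>\<^bsub>B\<^esub> inv\<^bsub>B\<^esub> (r (snd a)))"

lemma F_Z1: assumes q: "q \<in> ZL X B act" shows "F q \<in> Z1 X B act"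
proof -
  have "F q (x \<otimes>\<^bsub>X\<^esub> y) = F q x \<otimes>\<^bsub>B\<^esub> act x (F q y)" if x: "x \<in> carrier X" and y: "y \<in> carrier X" for x y
  proof -
    have c1: "q (\<one>\<^bsub>B\<^esub>, y) \<in> carrier B" and c2: "q (\<one>\<^bsub>B\<^esub>, x) \<in> carrier B"
      using ZL_cl[OF q _ y] ZL_cl[OF q _ x] by auto
    show ?thesis using x y c1 c2 ZL_B[OF q x y]
      by (simp add: F_def iota_X_def act_inv B.inv_mult_group act_cl)
  qed
  then show ?thesis using ZL_cl[OF q] by (auto simp: Z1_def F_def iota_X_def)
qed

lemma GF: assumes q: "q \<in> ZL X B act" shows "G (F q) = q"
proof
  fix a show "G (F q) a = q a"
  proof (cases "a \<in> carrier S")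
    case True
    then obtain b x where a: "a = (b,x)" "b \<in> carrier B" "x \<in> carrier X" by (auto simp: S_carrier)
    then show ?thesis using ZL_A[OF q a(2,3)] ZL_cl[OF q _ a(3)] True
      by (simp add: G_def F_def iota_X_def)
  next
    case False then show ?thesis using ZL_D(1)[OF q] by (auto simp: G_def)
  qed
qed

lemma Z1_D: assumes r: "r \<in> Z1 X B act"
  shows "r \<in> carrier X \<rightarrow>\<^sub>E carrier B"
    "\<And>x y. x \<in> carrier X \<Longrightarrow> y \<in> carrier X \<Longrightarrow> r (x \<otimes>\<^bsub>X\<^esub> y) = r x \<otimes>\<^bsub>B\<^esub> act x (r y)"
  using r by (auto simp: Z1_def)

lemma Z1_one: assumes r: "r \<in> Z1 X B act" shows "r \<one>\<^bsub>X\<^esub> = \<one>\<^bsub>B\<^esub>"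
proof -
  have c: "r \<one>\<^bsub>X\<^esub> \<in> carrier B" using Z1_D(1)[OF r] by auto
  have "r \<one>\<^bsub>X\<^esub> \<otimes>\<^bsub>B\<^esub> r \<one>\<^bsub>X\<^esub> = r \<one>\<^bsub>X\<^esub> \<otimes>\<^bsub>B\<^esub> \<one>\<^bsub>B\<^esub>"
    using Z1_D(2)[OF r, of "\<one>\<^bsub>X\<^esub>" "\<one>\<^bsub>X\<^esub>"] c act_one by simp
  then show ?thesis using B.Units_l_cancel c by (metis B.Units_eq B.one_closed)
qed

lemma FG: assumes r: "r \<in> Z1 X B act" shows "F (G r) = r"
proof
  fix x show "F (G r) x = r x"
    using Z1_D(1)[OF r] by (auto simp: F_def G_def iota_X_def S_carrier PiE_def Pi_def extensional_def)
qed

lemma G_ZL: assumes r: "r \<in> Z1 X B act" shows "G r \<in> ZL X B act"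
proof -
  have rc: "\<And>x. x \<in> carrier X \<Longrightarrow> r x \<in> carrier B" using Z1_D(1)[OF r] by auto
  have G: "\<And>b x. b \<in> carrier B \<Longrightarrow> x \<in> carrier X \<Longrightarrow> G r (b,x) = b \<otimes>\<^bsub>B\<^esub> inv\<^bsub>B\<^esub> r x"
    by (simp add: G_def S_carrier)
  have 1: "G r \<in> carrier S \<rightarrow>\<^sub>E carrier B" using rc by (auto simp: G_def S_carrier)
  have 2: "G r \<one>\<^bsub>S\<^esub> = \<one>\<^bsub>B\<^esub>" using Z1_one[OF r] by (simp add: S_one G)
  have 3: "G r (iota_B X b \<otimes>\<^bsub>S\<^esub> a) = b \<otimes>\<^bsub>B\<^esub> G r a" if "b \<in> carrier B" "a \<in> carrier S" for b a
    using that rc by (auto simp: S_carrier iota_B_def S_mult act_one G B.m_assoc)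
  have 4: "G r (a \<otimes>\<^bsub>S\<^esub> a') = G r (a \<otimes>\<^bsub>S\<^esub> iota_B X (G r a'))" if A: "a \<in> carrier S" "a' \<in> carrier S" for a a'
  proof -
    obtain b x b' x' where a: "a = (b,x)" "a' = (b',x')" and c: "b \<in> carrier B" "x \<in> carrier X"
      "b' \<in> carrier B" "x' \<in> carrier X" using A by (cases a, cases a') (auto simp: S_carrier)
    show ?thesis using c rc[of x] rc[of x'] Z1_D(2)[OF r c(2) c(4)]
      by (simp add: a S_mult iota_B_def G act_cl act_inv act_hom B.inv_mult_group B.m_assoc)
  qed
  show ?thesis using 1 2 3 4 by (simp add: ZL_def Let_def)
qed

lemma grp_eq: "a \<in> carrier B \<Longrightarrow> b \<in> carrier B \<Longrightarrow> c \<in> carrier B \<Longrightarrow> d \<in> carrier B \<Longrightarrow>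
   (a \<otimes>\<^bsub>B\<^esub> b = c \<otimes>\<^bsub>B\<^esub> d) \<longleftrightarrow> (inv\<^bsub>B\<^esub> a \<otimes>\<^bsub>B\<^esub> c = b \<otimes>\<^bsub>B\<^esub> inv\<^bsub>B\<^esub> d)"
  by (metis B.inv_closed B.inv_solve_left B.inv_solve_right B.m_assoc B.m_closed)

lemma desc_coh: assumes q: "q \<in> ZL X B act" and q': "q' \<in> ZL X B act"
  shows "(q,q') \<in> desc_rel X B act \<longleftrightarrow> (F q, F q') \<in> coh_rel X B act"
proof -
  have key: "(\<forall>a\<in>carrier S. q a \<otimes>\<^bsub>B\<^esub> b0 = q' (a \<otimes>\<^bsub>S\<^esub> iota_B X b0)) \<longleftrightarrow>
     (\<forall>x\<in>carrier X. F q x \<otimes>\<^bsub>B\<^esub> act x b0 = b0 \<otimes>\<^bsub>B\<^esub> F q' x)" if b0: "b0 \<in> carrier B" for b0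
  proof -
    have e: "q (b,x) \<otimes>\<^bsub>B\<^esub> b0 = q' ((b,x) \<otimes>\<^bsub>S\<^esub> iota_B X b0) \<longleftrightarrow>
       q (\<one>\<^bsub>B\<^esub>,x) \<otimes>\<^bsub>B\<^esub> b0 = act x b0 \<otimes>\<^bsub>B\<^esub> q' (\<one>\<^bsub>B\<^esub>,x)"
      if "b \<in> carrier B" "x \<in> carrier X" for b x
    proof -
      have c: "q (\<one>\<^bsub>B\<^esub>,x) \<in> carrier B" "q' (\<one>\<^bsub>B\<^esub>,x) \<in> carrier B" "act x b0 \<in> carrier B"
        using ZL_cl[OF q _ that(2)] ZL_cl[OF q' _ that(2)] act_cl[OF that(2) b0] by auto
      have "(b,x) \<otimes>\<^bsub>S\<^esub> iota_B X b0 = (b \<otimes>\<^bsub>B\<^esub> act x b0, x)" using that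
        by (simp add: S_mult iota_B_def)
      then show ?thesis using ZL_A[OF q that] ZL_A[OF q' B.m_closed[OF that(1) c(3)] that(2)]
         c that b0 by (simp add: B.m_assoc)
    qed
    have e2: "q (\<one>\<^bsub>B\<^esub>,x) \<otimes>\<^bsub>B\<^esub> b0 = act x b0 \<otimes>\<^bsub>B\<^esub> q' (\<one>\<^bsub>B\<^esub>,x) \<longleftrightarrow>
       F q x \<otimes>\<^bsub>B\<^esub> act x b0 = b0 \<otimes>\<^bsub>B\<^esub> F q' x" if "x \<in> carrier X" for x
    proof -
      have c: "q (\<one>\<^bsub>B\<^esub>,x) \<in> carrier B" "q' (\<one>\<^bsub>B\<^esub>,x) \<in> carrier B" "act x b0 \<in> carrier B"
        using ZL_cl[OF q _ that] ZL_cl[OF q' _ that] act_cl[OF that b0] by auto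
      show ?thesis using grp_eq[OF c(1) b0 c(3) c(2)] that by (simp add: F_def iota_X_def)
    qed
    show ?thesis
    proof
      assume L: "\<forall>a\<in>carrier S. q a \<otimes>\<^bsub>B\<^esub> b0 = q' (a \<otimes>\<^bsub>S\<^esub> iota_B X b0)"
      show "\<forall>x\<in>carrier X. F q x \<otimes>\<^bsub>B\<^esub> act x b0 = b0 \<otimes>\<^bsub>B\<^esub> F q' x"
      proof
        fix x assume x: "x \<in> carrier X"
        have "(\<one>\<^bsub>B\<^esub>, x) \<in> carrier S" using x by (simp add: S_carrier)
        then show "F q x \<otimes>\<^bsub>B\<^esub> act x b0 = b0 \<otimes>\<^bsub>B\<^esub> F q' x" using L e[OF B.one_closed x] e2[OF x] by simp
      qed
    next
      assume R: "\<forall>x\<in>carrier X. F q x \<otimes>\<^bsub>B\<^esub> act x b0 = b0 \<otimes>\<^bsub>B\<^esub> F q' x"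
      show "\<forall>a\<in>carrier S. q a \<otimes>\<^bsub>B\<^esub> b0 = q' (a \<otimes>\<^bsub>S\<^esub> iota_B X b0)"
        using R e e2 by (auto simp: S_carrier)
    qed
  qed
  show ?thesis using key q q' F_Z1 by (auto simp: desc_rel_def coh_rel_def)
qed

lemma desc_class: assumes q: "q \<in> ZL X B act" shows "F ` (desc_rel X B act `` {q}) = coh_rel X B act `` {F q}"
proof (intro equalityI subsetI)
  fix r assume "r \<in> F ` (desc_rel X B act `` {q})"
  then obtain q' where "(q,q') \<in> desc_rel X B act" "r = F q'" by auto
  then show "r \<in> coh_rel X B act `` {F q}" using desc_coh q by (auto simp: desc_rel_def)
next
  fix r assume r: "r \<in> coh_rel X B act `` {F q}"
  then have rz: "r \<in> Z1 X B act" by (auto simp: coh_rel_def)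
  have "(q, G r) \<in> desc_rel X B act" using desc_coh[OF q G_ZL[OF rz]] FG[OF rz] r by auto
  then show "r \<in> F ` (desc_rel X B act `` {q})" using FG[OF rz] by (metis ImageI image_eqI singletonI)
qed

lemma F_inj: "inj_on F (ZL X B act)"
  by (metis GF inj_onI)

lemma F_img: "F ` ZL X B act = Z1 X B act"
proof
  show "F ` ZL X B act \<subseteq> Z1 X B act" using F_Z1 by blast
  show "Z1 X B act \<subseteq> F ` ZL X B act"
  proof
    fix r assume r: "r \<in> Z1 X B act"
    show "r \<in> F ` ZL X B act" using FG[OF r] G_ZL[OF r] by (metis image_eqI)
  qed
qed

lemma triv_Z1: "triv_cocycle X B \<in> Z1 X B act"
  by (auto simp: Z1_def triv_cocycle_def act_1)

lemma pB_G: "p_B X B act = G (triv_cocycle X B)"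
  by (auto simp: p_B_def G_def triv_cocycle_def S_carrier restrict_def fun_eq_iff)

lemma part1: "\<exists>\<Phi>. bij_betw \<Phi> (Desc1 X B act) (H1 X B act)
            \<and> \<Phi> (Desc1_base X B act) = H1_base X B act
            \<and> (\<forall>q\<in>ZL X B act.
                 (\<lambda>x\<in>carrier X. inv\<^bsub>B\<^esub> (q (iota_X B x))) \<in> Z1 X B act
               \<and> \<Phi> (desc_rel X B act `` {q})
                   = coh_rel X B act `` {(\<lambda>x\<in>carrier X. inv\<^bsub>B\<^esub> (q (iota_X B x)))})"
proof (intro exI conjI ballI)
  have sub: "\<And>C. C \<in> Desc1 X B act \<Longrightarrow> C \<subseteq> ZL X B act"
    by (auto simp: Desc1_def quotient_def desc_rel_def)
  show "bij_betw (image F) (Desc1 X B act) (H1 X B act)"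
  proof (rule bij_betw_imageI)
    show "inj_on (image F) (Desc1 X B act)"
    proof (rule inj_onI)
      fix C D assume "C \<in> Desc1 X B act" "D \<in> Desc1 X B act" "F ` C = F ` D"
      then show "C = D" using inj_on_image_eq_iff[OF F_inj sub sub] by blast
    qed
    show "image F ` Desc1 X B act = H1 X B act"
    proof
      show "image F ` Desc1 X B act \<subseteq> H1 X B act"
      proof
        fix K assume "K \<in> image F ` Desc1 X B act"
        then obtain C where C: "C \<in> Desc1 X B act" "K = F ` C" by blast
        from C(1) obtain q where q: "q \<in> ZL X B act" "C = desc_rel X B act `` {q}"
          unfolding Desc1_def by (blast elim: quotientE)
        have "K = coh_rel X B act `` {F q}" using C(2) q desc_class by simp
        then show "K \<in> H1 X B act" unfolding H1_def using F_Z1[OF q(1)] by (simp add: quotientI)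
      qed
      show "H1 X B act \<subseteq> image F ` Desc1 X B act"
      proof
        fix K assume "K \<in> H1 X B act"
        then obtain r where r: "r \<in> Z1 X B act" "K = coh_rel X B act `` {r}"
          unfolding H1_def by (blast elim: quotientE)
        have D: "desc_rel X B act `` {G r} \<in> Desc1 X B act"
          unfolding Desc1_def using G_ZL[OF r(1)] by (simp add: quotientI)
        have "F ` (desc_rel X B act `` {G r}) = K" using desc_class[OF G_ZL[OF r(1)]] FG[OF r(1)] r(2) by simp
        then show "K \<in> image F ` Desc1 X B act" using D by blast
      qed
    qed
  qed
  have pz: "p_B X B act \<in> ZL X B act" using pB_G G_ZL triv_Z1 by simp
  have Fp: "F (p_B X B act) = triv_cocycle X B" using pB_G FG triv_Z1 by simp
  show "F ` Desc1_base X B act = H1_base X B act"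
    unfolding Desc1_base_def H1_base_def using desc_class[OF pz] Fp by simp
  fix q assume q: "q \<in> ZL X B act"
  show "(\<lambda>x\<in>carrier X. inv\<^bsub>B\<^esub> (q (iota_X B x))) \<in> Z1 X B act" using F_Z1[OF q] by (simp add: F_def)
  show "F ` (desc_rel X B act `` {q}) = coh_rel X B act `` {(\<lambda>x\<in>carrier X. inv\<^bsub>B\<^esub> (q (iota_X B x)))}"
    using desc_class[OF q] by (simp add: F_def)
qed


lemma H0_sub: "subgroup (H0 X B act) B"
proof (rule B.subgroupI)
  show "H0 X B act \<subseteq> carrier B" by (auto simp: H0_def)
  show "H0 X B act \<noteq> {}" using act_1 by (auto simp: H0_def)
  show "\<And>a. a \<in> H0 X B act \<Longrightarrow> inv\<^bsub>B\<^esub> a \<in> H0 X B act" by (auto simp: H0_def act_inv)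
  show "\<And>a b. a \<in> H0 X B act \<Longrightarrow> b \<in> H0 X B act \<Longrightarrow> a \<otimes>\<^bsub>B\<^esub> b \<in> H0 X B act"
    by (auto simp: H0_def act_hom)
qed

lemma H0_group: "group (H0_group X B act)"
  unfolding H0_group_def by (rule B.subgroup_imp_group[OF H0_sub])

lemma Desc0_cond: assumes b0: "b0 \<in> carrier B"
  shows "(\<forall>a\<in>carrier S. p_B X B act (a \<otimes>\<^bsub>S\<^esub> iota_B X b0) = p_B X B act a \<otimes>\<^bsub>B\<^esub> b0)
     \<longleftrightarrow> (\<forall>x\<in>carrier X. act x b0 = b0)"
proof
  assume L: "\<forall>a\<in>carrier S. p_B X B act (a \<otimes>\<^bsub>S\<^esub> iota_B X b0) = p_B X B act a \<otimes>\<^bsub>B\<^esub> b0"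
  show "\<forall>x\<in>carrier X. act x b0 = b0"
  proof
    fix x assume x: "x \<in> carrier X"
    have "(\<one>\<^bsub>B\<^esub>, x) \<in> carrier S" using x by (simp add: S_carrier)
    then have "p_B X B act ((\<one>\<^bsub>B\<^esub>, x) \<otimes>\<^bsub>S\<^esub> iota_B X b0) = p_B X B act (\<one>\<^bsub>B\<^esub>, x) \<otimes>\<^bsub>B\<^esub> b0"
      using L by blast
    moreover have "(\<one>\<^bsub>B\<^esub>, x) \<otimes>\<^bsub>S\<^esub> iota_B X b0 = (act x b0, x)"
      using x b0 act_cl[OF x b0] by (simp add: S_mult iota_B_def)
    ultimately show "act x b0 = b0" using x b0 act_cl[OF x b0]
      by (simp add: p_B_def S_carrier)
  qed
next
  assume R: "\<forall>x\<in>carrier X. act x b0 = b0"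
  show "\<forall>a\<in>carrier S. p_B X B act (a \<otimes>\<^bsub>S\<^esub> iota_B X b0) = p_B X B act a \<otimes>\<^bsub>B\<^esub> b0"
    using R b0 by (auto simp: p_B_def S_mult iota_B_def S_carrier)
qed

lemma Desc0_carrier: "carrier (Desc0 X B act) = (\<lambda>b0. \<lambda>b\<in>carrier B. b \<otimes>\<^bsub>B\<^esub> b0) ` H0 X B act"
  using Desc0_cond by (auto simp: Desc0_def H0_def)

definition psi :: "'b \<Rightarrow> 'b \<Rightarrow> 'b" where
  "psi b0 = (\<lambda>b\<in>carrier B. b \<otimes>\<^bsub>B\<^esub> inv\<^bsub>B\<^esub> b0)"

lemma H0_cl: "a \<in> H0 X B act \<Longrightarrow> a \<in> carrier B" by (simp add: H0_def)

lemma Desc0_carrier': "carrier (Desc0 X B act) = psi ` H0 X B act"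
proof -
  have "(\<lambda>b0. \<lambda>b\<in>carrier B. b \<otimes>\<^bsub>B\<^esub> b0) ` H0 X B act = psi ` H0 X B act"
  proof (intro equalityI subsetI)
    fix f assume "f \<in> (\<lambda>b0. \<lambda>b\<in>carrier B. b \<otimes>\<^bsub>B\<^esub> b0) ` H0 X B act"
    then obtain b0 where b0: "b0 \<in> H0 X B act" "f = (\<lambda>b\<in>carrier B. b \<otimes>\<^bsub>B\<^esub> b0)" by blast
    have "f = psi (inv\<^bsub>B\<^esub> b0)" using b0 H0_cl by (simp add: psi_def)
    moreover have "inv\<^bsub>B\<^esub> b0 \<in> H0 X B act" using b0 subgroup.m_inv_closed[OF H0_sub] by blast
    ultimately show "f \<in> psi ` H0 X B act" by blast
  next
    fix f assume "f \<in> psi ` H0 X B act"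
    then obtain b0 where b0: "b0 \<in> H0 X B act" "f = psi b0" by blast
    moreover have "inv\<^bsub>B\<^esub> b0 \<in> H0 X B act" using b0 subgroup.m_inv_closed[OF H0_sub] by blast
    ultimately show "f \<in> (\<lambda>b0. \<lambda>b\<in>carrier B. b \<otimes>\<^bsub>B\<^esub> b0) ` H0 X B act"
      unfolding psi_def by blast
  qed
  then show ?thesis using Desc0_carrier by simp
qed

lemma psi_mult: "a \<in> carrier B \<Longrightarrow> c \<in> carrier B \<Longrightarrow>
    psi (a \<otimes>\<^bsub>B\<^esub> c) = psi a \<otimes>\<^bsub>Desc0 X B act\<^esub> psi c"
  by (auto simp: psi_def Desc0_def compose_def fun_eq_iff B.inv_mult_group B.m_assoc)

lemma psi_one: "psi \<one>\<^bsub>B\<^esub> = \<one>\<^bsub>Desc0 X B act\<^esub>"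
  by (auto simp: psi_def Desc0_def fun_eq_iff)

lemma Desc0_monoid: "monoid (Desc0 X B act)"
proof (rule monoidI)
  note C = Desc0_carrier'
  have HB: "\<And>a. a \<in> H0 X B act \<Longrightarrow> a \<in> carrier B" by (rule H0_cl)
  have Hm: "\<And>a c. a \<in> H0 X B act \<Longrightarrow> c \<in> H0 X B act \<Longrightarrow> a \<otimes>\<^bsub>B\<^esub> c \<in> H0 X B act"
    using subgroup.m_closed[OF H0_sub] by blast
  show "\<And>x y. x \<in> carrier (Desc0 X B act) \<Longrightarrow> y \<in> carrier (Desc0 X B act) \<Longrightarrow>
     x \<otimes>\<^bsub>Desc0 X B act\<^esub> y \<in> carrier (Desc0 X B act)"
    unfolding C using psi_mult HB Hm by (auto simp del: Desc0_def) (metis image_eqI psi_mult)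
  show "\<one>\<^bsub>Desc0 X B act\<^esub> \<in> carrier (Desc0 X B act)"
    unfolding C psi_one[symmetric] using subgroup.one_closed[OF H0_sub] by blast
  show "\<And>x y z. x \<in> carrier (Desc0 X B act) \<Longrightarrow> y \<in> carrier (Desc0 X B act) \<Longrightarrow> z \<in> carrier (Desc0 X B act) \<Longrightarrow>
     x \<otimes>\<^bsub>Desc0 X B act\<^esub> y \<otimes>\<^bsub>Desc0 X B act\<^esub> z = x \<otimes>\<^bsub>Desc0 X B act\<^esub> (y \<otimes>\<^bsub>Desc0 X B act\<^esub> z)"
    unfolding C using HB by (auto simp: psi_mult[symmetric] B.m_assoc)
  show "\<And>x. x \<in> carrier (Desc0 X B act) \<Longrightarrow> \<one>\<^bsub>Desc0 X B act\<^esub> \<otimes>\<^bsub>Desc0 X B act\<^esub> x = x"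
    unfolding C using HB by (auto simp: psi_one[symmetric] psi_mult[symmetric])
  show "\<And>x. x \<in> carrier (Desc0 X B act) \<Longrightarrow> x \<otimes>\<^bsub>Desc0 X B act\<^esub> \<one>\<^bsub>Desc0 X B act\<^esub> = x"
    unfolding C using HB by (auto simp: psi_one[symmetric] psi_mult[symmetric])
qed

lemma psi_iso: "psi \<in> iso (H0_group X B act) (Desc0 X B act)"
proof (rule isoI)
  have HB: "\<And>a. a \<in> H0 X B act \<Longrightarrow> a \<in> carrier B" by (rule H0_cl)
  show "psi \<in> hom (H0_group X B act) (Desc0 X B act)"
    unfolding hom_def H0_group_def using Desc0_carrier' HB psi_mult by auto
  have inj: "inj_on psi (H0 X B act)"
  proof (rule inj_onI)
    fix a c assume a: "a \<in> H0 X B act" and c: "c \<in> H0 X B act" and e: "psi a = psi c"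
    have "psi a \<one>\<^bsub>B\<^esub> = psi c \<one>\<^bsub>B\<^esub>" using e by simp
    then have "inv\<^bsub>B\<^esub> a = inv\<^bsub>B\<^esub> c" using HB[OF a] HB[OF c] by (simp add: psi_def)
    then show "a = c" using HB[OF a] HB[OF c] B.inv_inv by metis
  qed
  show "bij_betw psi (carrier (H0_group X B act)) (carrier (Desc0 X B act))"
    unfolding bij_betw_def H0_group_def using inj Desc0_carrier' by simp
qed

lemma part2: "group (Desc0 X B act) \<and> Desc0 X B act \<cong> H0_group X B act"
proof -
  have i: "H0_group X B act \<cong> Desc0 X B act" using psi_iso by (rule is_isoI)
  show ?thesis using group.iso_imp_group[OF H0_group i Desc0_monoid] group.iso_sym[OF H0_group i] by simp
qed

end

theorem theorem5p6:
  fixes X :: "('x, 'c) monoid_scheme" and B :: "('b, 'd) monoid_scheme"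
    and act :: "'x \<Rightarrow> 'b \<Rightarrow> 'b"
  assumes "left_X_group X B act"
  shows "(\<exists>\<Phi>. bij_betw \<Phi> (Desc1 X B act) (H1 X B act)
            \<and> \<Phi> (Desc1_base X B act) = H1_base X B act
            \<and> (\<forall>q\<in>ZL X B act.
                 (\<lambda>x\<in>carrier X. inv\<^bsub>B\<^esub> (q (iota_X B x))) \<in> Z1 X B act
               \<and> \<Phi> (desc_rel X B act `` {q})
                   = coh_rel X B act `` {(\<lambda>x\<in>carrier X. inv\<^bsub>B\<^esub> (q (iota_X B x)))}))
       \<and> group (Desc0 X B act)
       \<and> Desc0 X B act \<cong> H0_group X B act"
proof -
  interpret lxg X B act
    using assms unfolding left_X_group_def by (simp add: lxg_def lxg_axioms_def)
  show ?thesis using part1 part2 by blast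
qed

end
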